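(* Let $\hat K$ be a knot. The linking form of $\hat K\#\hat K$ has trivial isotropic cone (i.e. $\Lambda_0(\hat K\#\hat K)=\{0\}$) if and only if $\det(\hat K)$ is a product of distinct primes, each of which is congruent to $3\bmod 4$.
   Context: For a knot $K\subset S^3$, $D_K$ is the double branched cover of $S^3$ over $K$; $H_1(D_K;\mathbb{Z})$ is finite of odd order $\det(K)=|\Delta_K(-1)|$, and $\lambda:H_1(D_K)\times H_1(D_K)\to\mathbb{Q}/\mathbb{Z}$ is the standard symmetric non-degenerate linking form. The isotropic cone is $\Lambda_0(K)=\{g\in H_1(D_K):\lambda(g,g)=0\}$. $\hat K\#\hat K$ is the connected sum of $\hat K$ with itself (so its $H_1$ with linking form is the orthogonal sum of two copies of that of $\hat K$). *)

theory Defs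
  imports "HOL-Algebra.Algebra" "HOL-Number_Theory.Number_Theory" "HOL-Computational_Algebra.Squarefree"
begin

text \<open>Q/Z is represented by rat-valued functions read modulo the integers:
  a value q represents its class q + Z, and "q = 0 in Q/Z" is "q \<in> \<int>".\<close>

definition linking_form :: "('a, 'm) monoid_scheme \<Rightarrow> ('a \<Rightarrow> 'a \<Rightarrow> rat) \<Rightarrow> bool" where
  "linking_form G lam \<longleftrightarrow>
     (\<forall>x\<in>carrier G. \<forall>y\<in>carrier G. lam x y - lam y x \<in> \<int>) \<and>
     (\<forall>x\<in>carrier G. \<forall>y\<in>carrier G. \<forall>z\<in>carrier G.
         lam (x \<otimes>\<^bsub>G\<^esub> y) z - (lam x z + lam y z) \<in> \<int>) \<and>
     (\<forall>x\<in>carrier G. (\<forall>y\<in>carrier G. lam x y \<in> \<int>) \<longrightarrow> x = \<one>\<^bsub>G\<^esub>)"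

definition orth_sum :: "('a \<Rightarrow> 'a \<Rightarrow> rat) \<Rightarrow> ('b \<Rightarrow> 'b \<Rightarrow> rat) \<Rightarrow> ('a \<times> 'b \<Rightarrow> 'a \<times> 'b \<Rightarrow> rat)" where
  "orth_sum lam mu = (\<lambda>(a, b) (c, d). lam a c + mu b d)"

definition isotropic_cone :: "('a, 'm) monoid_scheme \<Rightarrow> ('a \<Rightarrow> 'a \<Rightarrow> rat) \<Rightarrow> 'a set" where
  "isotropic_cone G lam = {g \<in> carrier G. lam g g \<in> \<int>}"

end

theory Submission
  imports Defs
begin

lemma neg1_QR_iff:
  fixes p :: nat assumes "Factorial_Ring.prime p" "p > 2"
  shows "(\<exists>j::nat. p dvd j^2+1) \<longleftrightarrow> even ((p - 1) div 2)"
proof -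
  have ec: "[Legendre (-1) p = (-1) ^ ((p - 1) div 2)] (mod p)"
    using euler_criterion[OF assms] by simp
  have n0: "\<not> [(-1::int) = 0] (mod int p)"
    using assms by (auto simp: cong_def prime_gt_1_nat zmod_minus1)
  have n2: "\<not> [(1::int) = -1] (mod int p)"
  proof
    assume "[(1::int) = -1] (mod int p)"
    then have "int p dvd 2" by (auto simp: cong_iff_dvd_diff)
    then have "p dvd 2" by presburger
    then show False using assms by (auto dest: dvd_imp_le)
  qed
  show ?thesis
  proof
    assume "\<exists>j::nat. p dvd j^2+1"
    then obtain j::nat where "p dvd j^2+1" by blast
    then have "int p dvd (int j)^2 + 1" by (metis of_nat_1 of_nat_add of_nat_dvd_iff of_nat_power)
    then have "[(int j)^2 = -1] (mod int p)" by (simp add: cong_iff_dvd_diff)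
    then have "QuadRes p (-1)" unfolding QuadRes_def by blast
    then have "Legendre (-1) p = 1" using n0 by (simp add: Legendre_def)
    with ec have "[1 = (-1::int) ^ ((p - 1) div 2)] (mod p)" by simp
    then show "even ((p - 1) div 2)" using n2 by (auto simp: minus_one_power_iff split: if_splits)
  next
    assume "even ((p - 1) div 2)"
    then have "[Legendre (-1) p = 1] (mod p)" using ec by simp
    then have "QuadRes p (-1)"
      using n0 n2 by (auto simp: Legendre_def cong_sym split: if_splits)
    then obtain y where y: "[y^2 = -1] (mod int p)" unfolding QuadRes_def by blast
    define j where "j = nat (y mod p)"
    have jy: "int j = y mod p" using assms j_def by simp
    have "[(int j)^2 = y^2] (mod int p)" unfolding jy by (simp add: cong_def power_mod)
    with y have "[(int j)^2 = -1] (mod int p)" using cong_trans by blast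
    then have "int p dvd (int j)^2 + 1" by (simp add: cong_iff_dvd_diff)
    then have "p dvd j^2 + 1" by (metis of_nat_1 of_nat_add of_nat_dvd_iff of_nat_power)
    then show "\<exists>j::nat. p dvd j^2+1" by blast
  qed
qed


lemma inj_sq: fixes p :: nat and A :: int and x x' :: nat
  assumes p: "Factorial_Ring.prime p" and nA: "\<not> int p dvd A"
    and b: "2 * x < p" "2 * x' < p" and d: "int p dvd A * ((int x)^2 - (int x')^2)"
  shows "x = x'"
proof -
  have pi: "Factorial_Ring.prime (int p)" using p by simp
  have "int p dvd ((int x)^2 - (int x')^2)" using d nA pi prime_dvd_mult_iff by blast
  then have "int p dvd (int x - int x') * (int x + int x')" by (simp add: power2_eq_square algebra_simps)
  then have "int p dvd (int x - int x') \<or> int p dvd (int x + int x')" using pi prime_dvd_mult_iff by blast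
  then show ?thesis
  proof
    assume h: "int p dvd (int x - int x')"
    show ?thesis
    proof (rule ccontr)
      assume "x \<noteq> x'"
      then have "int x - int x' \<noteq> 0" by simp
      then have "\<bar>int p\<bar> \<le> \<bar>int x - int x'\<bar>" using dvd_imp_le_int h by blast
      then show False using b by linarith
    qed
  next
    assume h: "int p dvd (int x + int x')"
    show ?thesis
    proof (rule ccontr)
      assume "x \<noteq> x'"
      then have "int x + int x' \<noteq> 0" by simp
      then have "\<bar>int p\<bar> \<le> \<bar>int x + int x'\<bar>" using dvd_imp_le_int h by blast
      then show False using b by linarith
    qed
  qed
qed

lemma pigeon: fixes p :: nat and A C :: int
  assumes p: "Factorial_Ring.prime p" "p > 2" and nA: "\<not> int p dvd A"
  shows "\<exists>x y::nat. int p dvd A * (int x)^2 + A * (int y)^2 + C"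
proof -
  define h where "h = (p - 1) div 2"
  have odd: "odd p" using p prime_odd_nat by blast
  then have ph: "p = 2 * h + 1" unfolding h_def by presburger
  define I where "I = {0..h}"
  define f where "f = (\<lambda>x::nat. (A * (int x)^2) mod int p)"
  define g where "g = (\<lambda>y::nat. (- C - A * (int y)^2) mod int p)"
  have bI: "\<And>x. x \<in> I \<Longrightarrow> 2 * x < p" unfolding I_def using ph by auto
  have injf: "inj_on f I"
  proof (rule inj_onI)
    fix x x' assume "x \<in> I" "x' \<in> I" "f x = f x'"
    then have "[A * (int x)^2 = A * (int x')^2] (mod int p)" unfolding f_def cong_def by simp
    then have "int p dvd A * ((int x)^2 - (int x')^2)"
      by (simp add: cong_iff_dvd_diff right_diff_distrib dvd_diff_commute)
    then show "x = x'" using inj_sq[OF p(1) nA] bI \<open>x \<in> I\<close> \<open>x' \<in> I\<close> by blast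
  qed
  have injg: "inj_on g I"
  proof (rule inj_onI)
    fix x x' assume "x \<in> I" "x' \<in> I" "g x = g x'"
    then have "[- C - A * (int x)^2 = - C - A * (int x')^2] (mod int p)" unfolding g_def cong_def by simp
    then have "int p dvd (- C - A * (int x)^2) - (- C - A * (int x')^2)"
      by (simp add: cong_iff_dvd_diff)
    moreover have "(- C - A * (int x)^2) - (- C - A * (int x')^2) = A * ((int x')^2 - (int x)^2)"
      by (simp add: algebra_simps)
    ultimately have "int p dvd A * ((int x')^2 - (int x)^2)" by simp
    then show "x = x'" using inj_sq[OF p(1) nA] bI \<open>x \<in> I\<close> \<open>x' \<in> I\<close> by (metis)
  qed
  have ppos: "int p > 0" using p by simp
  have sub: "f ` I \<union> g ` I \<subseteq> {0..<int p}" unfolding f_def g_def using ppos by auto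
  have "f ` I \<inter> g ` I \<noteq> {}"
  proof
    assume e: "f ` I \<inter> g ` I = {}"
    have "card (f ` I \<union> g ` I) = card (f ` I) + card (g ` I)"
      using e by (intro card_Un_disjoint) (auto simp: I_def)
    also have "\<dots> = 2 * (h + 1)" using card_image[OF injf] card_image[OF injg] by (simp add: I_def)
    finally have "card (f ` I \<union> g ` I) = p + 1" using ph by simp
    moreover have "card (f ` I \<union> g ` I) \<le> card {0..<int p}" using sub by (intro card_mono) auto
    ultimately show False by simp
  qed
  then obtain x y where xy: "x \<in> I" "y \<in> I" "f x = g y" by blast
  then have "[A * (int x)^2 = - C - A * (int y)^2] (mod int p)" unfolding f_def g_def cong_def by simp
  then have "int p dvd A * (int x)^2 - (- C - A * (int y)^2)" by (simp add: cong_iff_dvd_diff)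
  then show ?thesis by (metis diff_minus_eq_add diff_diff_eq2 add.commute add.left_commute)
qed

lemma dvd_aux: assumes "(j::nat) < p" "l < p" "p dvd (p - l + j)" shows "j = l"
proof -
  obtain q where q: "p - l + j = p * q" using assms(3) by blast
  consider "q = 0" | "q = 1" | "q \<ge> 2" by linarith
  then show ?thesis
  proof cases
    case 1 then show ?thesis using q assms by simp
  next
    case 2 then show ?thesis using q assms by simp
  next
    case 3
    then have "p * q \<ge> p * 2" by (intro mult_le_mono2)
    then show ?thesis using q assms by linarith
  qed
qed

context comm_group begin

lemma pow_modp: assumes "a \<in> carrier G" "a [^] (p::nat) = \<one>"
  shows "a [^] (i::nat) = a [^] (i mod p)"
proof -
  have 1: "a [^] i = a [^] (p * (i div p)) \<otimes> a [^] (i mod p)"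
    using assms(1) by (simp add: nat_pow_mult)
  have 2: "a [^] (p * (i div p)) = \<one>"
    using assms by (simp add: nat_pow_pow[symmetric])
  show ?thesis using 1 2 assms(1) by simp
qed

lemma ordp: assumes "a \<in> carrier G" "a \<noteq> \<one>" "a [^] (p::nat) = \<one>" "Factorial_Ring.prime p" "a [^] (m::nat) = \<one>"
  shows "p dvd m"
proof -
  have "ord a dvd p" using assms pow_eq_id by blast
  moreover have "ord a \<noteq> 1" using assms ord_eq_1 by blast
  ultimately have "ord a = p" using assms(4) by (meson prime_nat_iff)
  then show ?thesis using assms pow_eq_id by blast
qed

lemma pow_root: assumes "c \<in> carrier G" "c [^] (p::nat) = \<one>" "coprime d p" "c [^] (d::nat) = x"
  shows "\<exists>e::nat. c = x [^] e"
proof -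
  obtain e where e: "[d * e = Suc 0] (mod p)" using cong_solve_coprime_nat assms(3) by blast
  have "x [^] e = c [^] (d * e)" by (metis assms(1) assms(4) nat_pow_pow)
  also have "\<dots> = c [^] ((d * e) mod p)" using pow_modp assms by blast
  also have "\<dots> = c [^] (Suc 0 mod p)" using e by (simp add: cong_def)
  also have "\<dots> = c"
  proof (cases "p = 1")
    case True
    then have "c = \<one>" using assms by simp
    then show ?thesis by simp
  next
    case False
    then show ?thesis using assms
      by (metis One_nat_def mod_less nat_pow_eone not_less_eq not_less_zero less_2_cases pow_modp)
  qed
  finally show ?thesis by metis
qed

lemma swap4: "x \<in> carrier G \<Longrightarrow> y \<in> carrier G \<Longrightarrow> z \<in> carrier G \<Longrightarrow> w \<in> carrier G \<Longrightarrow>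
  (x \<otimes> y) \<otimes> (z \<otimes> w) = (x \<otimes> z) \<otimes> (y \<otimes> w)"
  by (simp add: m_assoc m_lcomm)

lemma mult2: "a \<in> carrier G \<Longrightarrow> c \<in> carrier G \<Longrightarrow>
  (a [^] (i::nat) \<otimes> c [^] (j::nat)) \<otimes> (a [^] (k::nat) \<otimes> c [^] (l::nat)) = a [^] (i + k) \<otimes> c [^] (j + l)"
  by (simp add: swap4 nat_pow_mult)

lemma cyc: assumes fin: "finite (carrier G)" and p: "Factorial_Ring.prime p"
  and a: "a \<in> carrier G" "a \<noteq> \<one>" "a [^] p = \<one>"
  and c: "c \<in> carrier G" "c [^] p = \<one>" and sq: "\<not> p^2 dvd order G"
  shows "\<exists>i::nat. c = a [^] i"
proof (rule ccontr)
  assume nc: "\<not> (\<exists>i::nat. c = a [^] i)"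
  define H where "H = {x. \<exists>(i::nat) (j::nat). x = a [^] i \<otimes> c [^] j}"
  have sub: "subgroup H G"
  proof (rule subgroupI)
    show "H \<subseteq> carrier G" unfolding H_def using a c by (auto intro!: m_closed nat_pow_closed)
    show "H \<noteq> {}" unfolding H_def by blast
  next
    fix x assume "x \<in> H"
    then obtain i j :: nat where x: "x = a [^] i \<otimes> c [^] j" unfolding H_def by blast
    have "(a [^] ((p - 1) * i) \<otimes> c [^] ((p - 1) * j)) \<otimes> x = a [^] ((p - 1) * i + i) \<otimes> c [^] ((p - 1) * j + j)"
      unfolding x using mult2 a c by blast
    also have "(p - 1) * i + i = p * i" using prime_gt_0_nat[OF p] by (cases p) auto
    also have "(p - 1) * j + j = p * j" using prime_gt_0_nat[OF p] by (cases p) auto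
    finally have "(a [^] ((p - 1) * i) \<otimes> c [^] ((p - 1) * j)) \<otimes> x = \<one>"
      using a c by (simp add: nat_pow_pow[symmetric])
    then have "inv x = a [^] ((p - 1) * i) \<otimes> c [^] ((p - 1) * j)"
      using a c x by (intro inv_equality) auto
    then show "inv x \<in> H" unfolding H_def by blast
  next
    fix x y assume "x \<in> H" "y \<in> H"
    then obtain i j k l :: nat where "x = a [^] i \<otimes> c [^] j" "y = a [^] k \<otimes> c [^] l" unfolding H_def by blast
    then show "x \<otimes> y \<in> H" using mult2 a c unfolding H_def by blast
  qed
  define f where "f = (\<lambda>(i::nat, j::nat). a [^] i \<otimes> c [^] j)"
  have Hf: "H = f ` ({..<p} \<times> {..<p})"
  proof
    show "f ` ({..<p} \<times> {..<p}) \<subseteq> H" unfolding H_def f_def by auto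
    show "H \<subseteq> f ` ({..<p} \<times> {..<p})"
    proof
      fix x assume "x \<in> H"
      then obtain i j :: nat where x: "x = a [^] i \<otimes> c [^] j" unfolding H_def by blast
      have "a [^] i = a [^] (i mod p)" using pow_modp a by blast
      moreover have "c [^] j = c [^] (j mod p)" using pow_modp c by blast
      ultimately have "x = f (i mod p, j mod p)" unfolding x f_def by simp
      moreover have "(i mod p, j mod p) \<in> {..<p} \<times> {..<p}" using prime_gt_0_nat[OF p] by simp
      ultimately show "x \<in> f ` ({..<p} \<times> {..<p})" by blast
    qed
  qed
  have inj: "inj_on f ({..<p} \<times> {..<p})"
  proof (rule inj_onI)
    fix u v assume u: "u \<in> {..<p} \<times> {..<p}" and v: "v \<in> {..<p} \<times> {..<p}" and fe: "f u = f v"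
    obtain i j where ij: "u = (i, j)" by (cases u)
    obtain k l where kl: "v = (k, l)" by (cases v)
    have lt: "i < p" "j < p" "k < p" "l < p" using u v ij kl by auto
    have e: "a [^] i \<otimes> c [^] j = a [^] k \<otimes> c [^] l" using fe ij kl f_def by simp
    have "(a [^] (p - i) \<otimes> c [^] (p - l)) \<otimes> (a [^] i \<otimes> c [^] j) = a [^] (p - i + i) \<otimes> c [^] (p - l + j)"
      using mult2 a c by blast
    also have "\<dots> = c [^] (p - l + j)" using lt a c by simp
    finally have e1: "(a [^] (p - i) \<otimes> c [^] (p - l)) \<otimes> (a [^] i \<otimes> c [^] j) = c [^] (p - l + j)" .
    have "(a [^] (p - i) \<otimes> c [^] (p - l)) \<otimes> (a [^] k \<otimes> c [^] l) = a [^] (p - i + k) \<otimes> c [^] (p - l + l)"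
      using mult2 a c by blast
    also have "\<dots> = a [^] (p - i + k)" using lt a c by simp
    finally have e2: "(a [^] (p - i) \<otimes> c [^] (p - l)) \<otimes> (a [^] k \<otimes> c [^] l) = a [^] (p - i + k)" .
    have ce: "c [^] (p - l + j) = a [^] (p - i + k)" using e e1 e2 by simp
    have jl: "j = l"
    proof (rule ccontr)
      assume "j \<noteq> l"
      then have "\<not> p dvd (p - l + j)" using lt dvd_aux by blast
      then have "coprime (p - l + j) p" using p by (metis coprime_commute prime_imp_coprime)
      then obtain e :: nat where "c = (a [^] (p - i + k)) [^] e" using pow_root[OF c(1) c(2) _ ce] by blast
      then have "c = a [^] ((p - i + k) * e)" using a by (simp add: nat_pow_pow)
      then show False using nc by blast
    qed
    then have "a [^] (p - i + k) = \<one>" using ce c lt by simp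
    then have "p dvd (p - i + k)" using ordp a p by blast
    then have "k = i" using lt dvd_aux by blast
    then show "u = v" using ij kl jl \<open>k = i\<close> by simp
  qed
  have "card H = p^2" unfolding Hf using card_image[OF inj] by (simp add: power2_eq_square card_cartesian_product)
  then have "p^2 dvd order G" using lagrange[OF sub] by (metis dvd_triv_right)
  then show False using sq by blast
qed

end

lemma Zt: "(a::rat) - b \<in> \<int> \<Longrightarrow> b - c \<in> \<int> \<Longrightarrow> a - c \<in> \<int>"
  by (metis Ints_add diff_add_cancel add_diff_eq diff_diff_eq2)
lemma Zs: "(a::rat) - b \<in> \<int> \<Longrightarrow> b - a \<in> \<int>"
  by (metis Ints_minus minus_diff_eq)
lemma Zadd: "(a::rat) - b \<in> \<int> \<Longrightarrow> c - d \<in> \<int> \<Longrightarrow> (a + c) - (b + d) \<in> \<int>"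
proof -
  assume "a - b \<in> \<int>" "c - d \<in> \<int>"
  then have "(a - b) + (c - d) \<in> \<int>" by (rule Ints_add)
  then show ?thesis by (simp add: algebra_simps)
qed
lemma Zmult: "(a::rat) - b \<in> \<int> \<Longrightarrow> of_int k * a - of_int k * b \<in> \<int>"
proof -
  assume "a - b \<in> \<int>"
  then have "of_int k * (a - b) \<in> \<int>" by (intro Ints_mult) auto
  then show ?thesis by (simp add: algebra_simps)
qed
lemma Zmultn: "(a::rat) - b \<in> \<int> \<Longrightarrow> of_nat k * a - of_nat k * b \<in> \<int>"
  using Zmult[of a b "int k"] by simp
lemma Zin: "(a::rat) - b \<in> \<int> \<Longrightarrow> b \<in> \<int> \<Longrightarrow> a \<in> \<int>"
  by (metis Ints_add diff_add_cancel)

locale lform = comm_group G for G (structure) +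
  fixes lam :: "'a \<Rightarrow> 'a \<Rightarrow> rat"
  assumes lf: "linking_form G lam"
begin

lemma symm: "x \<in> carrier G \<Longrightarrow> y \<in> carrier G \<Longrightarrow> lam x y - lam y x \<in> \<int>"
  using lf unfolding linking_form_def by blast
lemma linl: "x \<in> carrier G \<Longrightarrow> y \<in> carrier G \<Longrightarrow> z \<in> carrier G \<Longrightarrow> lam (x \<otimes> y) z - (lam x z + lam y z) \<in> \<int>"
  using lf unfolding linking_form_def by blast
lemma nondeg: "x \<in> carrier G \<Longrightarrow> (\<And>y. y \<in> carrier G \<Longrightarrow> lam x y \<in> \<int>) \<Longrightarrow> x = \<one>"
  using lf unfolding linking_form_def by blast

lemma linr: assumes "x \<in> carrier G" "y \<in> carrier G" "z \<in> carrier G"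
  shows "lam z (x \<otimes> y) - (lam z x + lam z y) \<in> \<int>"
proof -
  have "lam z (x \<otimes> y) - lam (x \<otimes> y) z \<in> \<int>" using symm assms by simp
  moreover have "lam (x \<otimes> y) z - (lam x z + lam y z) \<in> \<int>" using linl assms by simp
  moreover have "(lam x z + lam y z) - (lam z x + lam z y) \<in> \<int>"
    using Zadd[OF symm symm] assms by simp
  ultimately show ?thesis by (metis Zt)
qed

lemma onel: assumes "z \<in> carrier G" shows "lam \<one> z \<in> \<int>"
proof -
  have "lam (\<one> \<otimes> \<one>) z - (lam \<one> z + lam \<one> z) \<in> \<int>" using linl[of \<one> \<one> z] assms by blast
  moreover have "lam (\<one> \<otimes> \<one>) z - (lam \<one> z + lam \<one> z) = - lam \<one> z" by simp
  ultimately have "- lam \<one> z \<in> \<int>" by simp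
  then show ?thesis by (metis Ints_minus minus_minus)
qed

lemma oner: assumes "z \<in> carrier G" shows "lam z \<one> \<in> \<int>"
  using symm[OF assms one_closed] onel[OF assms] by (metis Zin)

lemma powl: assumes "x \<in> carrier G" "z \<in> carrier G"
  shows "lam (x [^] (k::nat)) z - of_nat k * lam x z \<in> \<int>"
proof (induction k)
  case 0 then show ?case using onel assms by simp
next
  case (Suc k)
  have "lam (x [^] Suc k) z - (lam (x [^] k) z + lam x z) \<in> \<int>"
    using linl[of "x [^] k" x z] assms by (simp add: nat_pow_Suc)
  moreover have "(lam (x [^] k) z + lam x z) - (of_nat k * lam x z + lam x z) \<in> \<int>"
    using Zadd[OF Suc.IH, of "lam x z" "lam x z"] by simp
  ultimately show ?case by (metis Zt of_nat_Suc distrib_right mult_1 add.commute)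
qed

lemma powr: assumes "x \<in> carrier G" "z \<in> carrier G"
  shows "lam z (x [^] (k::nat)) - of_nat k * lam z x \<in> \<int>"
proof -
  have "lam z (x [^] k) - lam (x [^] k) z \<in> \<int>" using symm assms by simp
  moreover note powl[OF assms, of k]
  moreover have "of_nat k * lam x z - of_nat k * lam z x \<in> \<int>" using Zmultn[OF symm] assms by simp
  ultimately show ?thesis by (metis Zt)
qed

lemma sq_mult: assumes "x \<in> carrier G" "y \<in> carrier G"
  shows "lam (x \<otimes> y) (x \<otimes> y) - (lam x x + 2 * lam x y + lam y y) \<in> \<int>"
proof -
  have 1: "lam (x \<otimes> y) (x \<otimes> y) - (lam x (x \<otimes> y) + lam y (x \<otimes> y)) \<in> \<int>" using linl assms by simp
  have 2: "lam x (x \<otimes> y) - (lam x x + lam x y) \<in> \<int>" using linr assms by simp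
  have 3: "lam y (x \<otimes> y) - (lam y x + lam y y) \<in> \<int>" using linr assms by simp
  have 4: "lam y x - lam x y \<in> \<int>" using symm assms by simp
  have "(lam x (x \<otimes> y) + lam y (x \<otimes> y)) - ((lam x x + lam x y) + (lam y x + lam y y)) \<in> \<int>"
    using Zadd[OF 2 3] .
  moreover have "((lam x x + lam x y) + (lam y x + lam y y)) - (lam x x + 2 * lam x y + lam y y) \<in> \<int>"
    using 4 by (simp add: algebra_simps)
  ultimately show ?thesis using 1 by (metis Zt)
qed

lemma sq_pow: assumes "x \<in> carrier G"
  shows "lam (x [^] (k::nat)) (x [^] k) - of_nat (k^2) * lam x x \<in> \<int>"
proof -
  have "lam (x [^] k) (x [^] k) - of_nat k * lam x (x [^] k) \<in> \<int>" using powl assms by simp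
  moreover have "of_nat k * lam x (x [^] k) - of_nat k * (of_nat k * lam x x) \<in> \<int>"
    using Zmultn[OF powr] assms by simp
  ultimately show ?thesis by (simp add: power2_eq_square mult.assoc) (metis Zt)
qed

lemma cone_iff: "(g, h) \<in> isotropic_cone (G \<times>\<times> G) (orth_sum lam lam) \<longleftrightarrow>
   g \<in> carrier G \<and> h \<in> carrier G \<and> lam g g + lam h h \<in> \<int>"
  by (simp add: isotropic_cone_def orth_sum_def)

end
lemma divZ: assumes "of_int z / of_nat p \<in> (\<int>::rat set)" "p > 0" shows "int p dvd z"
proof -
  obtain k where k: "of_int z / of_nat p = (of_int k :: rat)" using assms(1) Ints_cases by metis
  then have "(of_int z :: rat) = of_int k * of_nat p" using assms(2) by (simp add: field_simps)
  then have "z = k * int p" by (metis of_int_eq_iff of_int_mult of_int_of_nat_eq)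
  then show ?thesis by simp
qed

lemma Zdiv: assumes "int p dvd z" shows "of_int z / of_nat p \<in> (\<int>::rat set)"
proof (cases "p = 0")
  case True then show ?thesis by simp
next
  case False
  obtain k where "z = int p * k" using assms by blast
  then have "(of_int z / of_nat p :: rat) = of_int k" using False by simp
  then show ?thesis by simp
qed

lemma sub_pow: assumes "group G" "finite (carrier G)" "subgroup H G" "x \<in> H"
  shows "x [^]\<^bsub>G\<^esub> card H = \<one>\<^bsub>G\<^esub>"
proof -
  interpret group G by fact
  have "group (G\<lparr>carrier := H\<rparr>)" using subgroup_imp_group assms(3) by blast
  then have "x [^]\<^bsub>G\<lparr>carrier := H\<rparr>\<^esub> order (G\<lparr>carrier := H\<rparr>) = \<one>\<^bsub>G\<lparr>carrier := H\<rparr>\<^esub>"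
    using group.pow_order_eq_1 assms(4) by fastforce
  then show ?thesis by (simp add: order_def nat_pow_def)
qed

context lform begin

lemma pZ: assumes "a \<in> carrier G" "a [^] (p::nat) = \<one>" "y \<in> carrier G"
  shows "of_nat p * lam a y \<in> \<int>"
proof -
  have "lam \<one> y - of_nat p * lam a y \<in> \<int>" using powl[OF assms(1,3), of p] assms(2) by simp
  from Zin[OF Zs[OF this] onel[OF assms(3)]] show ?thesis .
qed

lemma pZr: assumes "a \<in> carrier G" "a [^] (p::nat) = \<one>" "y \<in> carrier G"
  shows "of_nat p * lam y a \<in> \<int>"
proof -
  have "lam y \<one> - of_nat p * lam y a \<in> \<int>" using powr[OF assms(1,3), of p] assms(2) by simp
  from Zin[OF Zs[OF this] oner[OF assms(3)]] show ?thesis .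
qed

lemma elem_p: assumes fin: "finite (carrier G)" and p: "Factorial_Ring.prime p" and d: "p dvd order G"
  shows "\<exists>a. a \<in> carrier G \<and> a \<noteq> \<one> \<and> a [^] p = \<one>"
proof -
  obtain m where "order G = p ^ 1 * m" using d by auto
  then obtain H where H: "subgroup H G" "card H = p ^ 1" using sylow_thm[OF p is_group _ fin] by blast
  have "card H > 1" using H p prime_gt_1_nat by simp
  have "\<not> H \<subseteq> {\<one>}"
  proof
    assume "H \<subseteq> {\<one>}"
    then have "card H \<le> card {\<one>}" by (intro card_mono) auto
    then show False using \<open>card H > 1\<close> by simp
  qed
  then obtain a where a: "a \<in> H" "a \<noteq> \<one>" by blast
  have "a [^] p = \<one>" using sub_pow[OF is_group fin H(1) a(1)] H(2) by simp
  
  moreover have "a \<in> carrier G" using H(1) a(1) subgroup.subset by blast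
  ultimately show ?thesis using a by blast
qed

definition triv where "triv \<longleftrightarrow> (\<forall>g h. g \<in> carrier G \<and> h \<in> carrier G \<and> lam g g + lam h h \<in> \<int> \<longrightarrow> g = \<one> \<and> h = \<one>)"

lemma trivD: assumes "triv" "g \<in> carrier G" "h \<in> carrier G" "lam g g + lam h h \<in> \<int>"
  shows "g = \<one> \<and> h = \<one>"
  using assms unfolding triv_def by auto

lemma partA: assumes fin: "finite (carrier G)" and tr: triv and p: "Factorial_Ring.prime p"
  and d: "p dvd order G" and p2: "p > 2"
  shows "p mod 4 = 3"
proof (rule ccontr)
  assume n3: "p mod 4 \<noteq> 3"
  have "odd p" using p p2 prime_odd_nat by blast
  then have "p mod 4 = 1" using n3 by presburger
  then have "even ((p - 1) div 2)" by presburger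
  then obtain j :: nat where j: "p dvd j^2 + 1" using neg1_QR_iff[OF p p2] by blast
  obtain a where a: "a \<in> carrier G" "a \<noteq> \<one>" "a [^] p = \<one>" using elem_p[OF fin p d] by blast
  have pa: "of_nat p * lam a a \<in> \<int>" using pZ a by blast
  obtain m where m: "j^2 + 1 = p * m" using j by blast
  have "of_nat (j^2 + 1) * lam a a = of_nat m * (of_nat p * lam a a)" using m by simp
  also have "\<dots> \<in> \<int>" by (rule Ints_mult[OF Ints_of_nat pa])
  finally have A0: "of_nat (j^2 + 1) * lam a a \<in> \<int>" .
  have "of_nat (j^2 + 1) * lam a a = lam a a + of_nat (j^2) * lam a a" by (simp add: algebra_simps)
  with A0 have A: "lam a a + of_nat (j^2) * lam a a \<in> \<int>" by simp
  have B: "(lam a a + lam (a [^] j) (a [^] j)) - (lam a a + of_nat (j^2) * lam a a) \<in> \<int>"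
    using sq_pow[OF a(1), of j] by (simp only: add_diff_cancel_left)
  have "lam a a + lam (a [^] j) (a [^] j) \<in> \<int>" using Zin[OF B A] .
  then have "a = \<one>" using trivD[OF tr a(1) nat_pow_closed[OF a(1)]] by blast
  then show False using a by blast
qed

lemma partB: assumes fin: "finite (carrier G)" and tr: triv and p: "Factorial_Ring.prime p"
  and p2: "p > 2"
  shows "\<not> p^2 dvd order G"
proof
  assume d: "p^2 dvd order G"
  then obtain m where "order G = p ^ 2 * m" by blast
  then obtain H where H: "subgroup H G" "card H = p^2" using sylow_thm[OF p is_group _ fin] by blast
  have Hc: "H \<subseteq> carrier G" using H(1) subgroup.subset by blast
  have Hp2: "\<And>x. x \<in> H \<Longrightarrow> x [^] (p^2) = \<one>" using sub_pow[OF is_group fin H(1)] H(2) by simp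
  have ppos: "p > 0" using p2 by simp
  show False
  proof (cases "\<exists>c \<in> H. c [^] p \<noteq> \<one>")
    case True
    then obtain c where c: "c \<in> H" "c [^] p \<noteq> \<one>" by blast
    have cc: "c \<in> carrier G" using c Hc by blast
    have "of_nat (p^2) * lam c c \<in> \<int>" using pZ[OF cc Hp2[OF c(1)] cc] .
    moreover have "lam (c [^] p) (c [^] p) - of_nat (p^2) * lam c c \<in> \<int>" using sq_pow[OF cc] .
    ultimately have "lam (c [^] p) (c [^] p) \<in> \<int>" using Zin by blast
    moreover have "lam \<one> \<one> \<in> \<int>" using onel by simp
    ultimately have "lam (c [^] p) (c [^] p) + lam \<one> \<one> \<in> \<int>" by (rule Ints_add)
    then have "c [^] p = \<one>" using trivD[OF tr nat_pow_closed[OF cc] one_closed] by blast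
    then show False using c by blast
  next
    case False
    then have Hp: "\<And>c. c \<in> H \<Longrightarrow> c [^] p = \<one>" by blast
    have "1 < p" using p prime_gt_1_nat by blast
    then have "card H > 1" using H(2) one_less_power[of p 2] by simp
    have "\<not> H \<subseteq> {\<one>}"
    proof
      assume "H \<subseteq> {\<one>}"
      then have "card H \<le> card {\<one>}" by (intro card_mono) auto
      then show False using \<open>card H > 1\<close> by simp
    qed
    then obtain a where aH: "a \<in> H" "a \<noteq> \<one>" by blast
    have a: "a \<in> carrier G" "a \<noteq> \<one>" "a [^] p = \<one>" using aH Hc Hp by auto
    have "p * 1 < p * p" using \<open>1 < p\<close> by (intro mult_strict_left_mono) auto
    then have pH: "p < card H" using H(2) by (simp add: power2_eq_square)
    have "card ((\<lambda>i. a [^] i) ` {..<p}) \<le> p" using card_image_le[of "{..<p}"] by simp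
    also note pH
    finally have "\<not> H \<subseteq> (\<lambda>i. a [^] i) ` {..<p}" by (meson card_mono finite_imageI finite_lessThan not_le)
    then obtain b where bH: "b \<in> H" "b \<notin> (\<lambda>i. a [^] i) ` {..<p}" by blast
    have b: "b \<in> carrier G" "b [^] p = \<one>" using bH Hc Hp by auto
    have nb: "\<And>i::nat. b \<noteq> a [^] i"
    proof
      fix i :: nat assume "b = a [^] i"
      then have "b = a [^] (i mod p)" using pow_modp a by metis
      then show False using bH ppos by auto
    qed
    show False
    proof (cases "lam a a \<in> \<int>")
      case True
      then have "lam a a + lam \<one> \<one> \<in> \<int>" using onel by (simp add: Ints_add)
      then have "a = \<one>" using trivD[OF tr a(1) one_closed] by blast
      then show False using a by blast
    next
      case False
      obtain \<alpha> where al: "of_nat p * lam a a = of_int \<alpha>" using pZ[OF a(1) a(3) a(1)] Ints_cases by metis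
      have laa: "lam a a = of_int \<alpha> / of_nat p" using al ppos by (simp add: field_simps)
      have na: "\<not> int p dvd \<alpha>" using False Zdiv laa by metis
      obtain \<gamma> where ga: "of_nat p * lam a b = of_int \<gamma>" using pZ[OF a(1) a(3) b(1)] Ints_cases by metis
      have "coprime \<alpha> (int p)"
        using na p by (metis coprime_commute prime_imp_coprime prime_nat_int_transfer)
      then obtain u where u: "[\<alpha> * u = 1] (mod int p)" using cong_solve_coprime_int by blast
      define t where "t = nat ((- \<gamma> * u) mod int p)"
      have tt: "int t = (- \<gamma> * u) mod int p" unfolding t_def using ppos by simp
      have "[int t * \<alpha> + \<gamma> = (- \<gamma> * u) * \<alpha> + \<gamma>] (mod int p)" unfolding tt
        by (intro cong_add cong_mult) (auto simp: cong_def)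
      moreover have "[(- \<gamma> * u) * \<alpha> + \<gamma> = - \<gamma> * 1 + \<gamma>] (mod int p)"
      proof -
        have "[- \<gamma> * (\<alpha> * u) = - \<gamma> * 1] (mod int p)" using u by (rule cong_scalar_left)
        then have "[- \<gamma> * (\<alpha> * u) + \<gamma> = - \<gamma> * 1 + \<gamma>] (mod int p)" by (intro cong_add) auto
        then show ?thesis by (simp add: algebra_simps)
      qed
      ultimately have "[int t * \<alpha> + \<gamma> = 0] (mod int p)" using cong_trans by fastforce
      then have tdv: "int p dvd int t * \<alpha> + \<gamma>" by (simp add: cong_0_iff)
      define b' where "b' = a [^] t \<otimes> b"
      have b'c: "b' \<in> carrier G" unfolding b'_def using a b by simp
      have "(a [^] t) [^] p = (a [^] p) [^] t" using a(1) by (simp add: nat_pow_pow mult.commute)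
      then have at: "(a [^] t) [^] p = \<one>" using a by simp
      have b'p: "b' [^] p = \<one>" unfolding b'_def using a b at
        by (simp add: pow_mult_distrib[OF m_comm])
      have "lam a b' - (lam a (a [^] t) + lam a b) \<in> \<int>" unfolding b'_def using linr a b by simp
      moreover have "(lam a (a [^] t) + lam a b) - (of_nat t * lam a a + lam a b) \<in> \<int>"
        using powr[OF a(1) a(1), of t] by simp
      moreover have "of_nat t * lam a a + lam a b = of_int (int t * \<alpha> + \<gamma>) / of_nat p"
        using laa ga ppos by (simp add: field_simps)
      moreover have "of_int (int t * \<alpha> + \<gamma>) / of_nat p \<in> (\<int> :: rat set)" using Zdiv[OF tdv] .
      ultimately have lab': "lam a b' \<in> \<int>" by (metis Zt Zin)
      obtain \<beta> where be: "of_nat p * lam b' b' = of_int \<beta>" using pZ[OF b'c b'p b'c] Ints_cases by metis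
      have lbb: "lam b' b' = of_int \<beta> / of_nat p" using be ppos by (simp add: field_simps)
      obtain x y :: nat where xy: "int p dvd \<alpha> * (int x)^2 + \<alpha> * (int y)^2 + \<beta>"
        using pigeon[OF p p2 na] by blast
      define g where "g = a [^] x \<otimes> b'"
      have gc: "g \<in> carrier G" unfolding g_def using a b'c by simp
      have 1: "lam g g - (lam (a [^] x) (a [^] x) + 2 * lam (a [^] x) b' + lam b' b') \<in> \<int>"
        unfolding g_def using sq_mult a b'c by simp
      have 2: "lam (a [^] x) (a [^] x) - of_nat (x^2) * lam a a \<in> \<int>" using sq_pow a by simp
      have "lam (a [^] x) b' - of_nat x * lam a b' \<in> \<int>" using powl a b'c by simp
      moreover have "of_nat x * lam a b' \<in> \<int>" using lab' by simp
      ultimately have "lam (a [^] x) b' \<in> \<int>" using Zin by blast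
      then have 3: "2 * lam (a [^] x) b' \<in> \<int>" by simp
      have 4: "lam (a [^] y) (a [^] y) - of_nat (y^2) * lam a a \<in> \<int>" using sq_pow a by simp
      have "(lam (a [^] x) (a [^] x) + 2 * lam (a [^] x) b' + lam b' b') - (of_nat (x^2) * lam a a + 0 + lam b' b') \<in> \<int>"
        using Zadd[OF Zadd[OF 2, of "2 * lam (a [^] x) b'" 0] , of "lam b' b'" "lam b' b'"] 3 by simp
      with 1 have 5: "lam g g - (of_nat (x^2) * lam a a + lam b' b') \<in> \<int>" by (metis Zt add_0_right)
      have 6: "(lam g g + lam (a [^] y) (a [^] y)) - ((of_nat (x^2) * lam a a + lam b' b') + of_nat (y^2) * lam a a) \<in> \<int>"
        using Zadd[OF 5 4] .
      have "(of_nat (x^2) * lam a a + lam b' b') + of_nat (y^2) * lam a a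
          = of_int (\<alpha> * (int x)^2 + \<alpha> * (int y)^2 + \<beta>) / of_nat p"
        unfolding laa lbb using ppos by (simp add: field_simps)
      also have "\<dots> \<in> \<int>" using Zdiv[OF xy] .
      finally have "lam g g + lam (a [^] y) (a [^] y) \<in> \<int>" using 6 Zin by blast
      then have "g = \<one>" using trivD[OF tr gc nat_pow_closed[OF a(1)]] by blast
      then have "a [^] x \<otimes> (a [^] t \<otimes> b) = \<one>" unfolding g_def b'_def .
      then have "a [^] (x + t) \<otimes> b = \<one>" using a b by (simp add: m_assoc[symmetric] nat_pow_mult)
      then have "b = inv (a [^] (x + t))" using a b by (metis inv_equality m_comm nat_pow_closed)
      also have "\<dots> = a [^] ((p - 1) * (x + t))"
      proof (rule inv_equality)
        have "a [^] ((p - 1) * (x + t)) \<otimes> a [^] (x + t) = a [^] ((p - 1) * (x + t) + (x + t))"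
          using a by (simp add: nat_pow_mult)
        also have "(p - 1) * (x + t) + (x + t) = p * (x + t)" using ppos by (cases p) auto
        also have "a [^] (p * (x + t)) = \<one>" using a by (simp add: nat_pow_pow[symmetric])
        finally show "a [^] ((p - 1) * (x + t)) \<otimes> a [^] (x + t) = \<one>" .
      qed (use a in auto)
      finally show False using nb by blast
    qed
  qed
qed

lemma C1: assumes fin: "finite (carrier G)" and p: "Factorial_Ring.prime p" and d: "p dvd order G"
  and p3: "p mod 4 = 3" and sq: "\<not> p^2 dvd order G"
  and a: "a \<in> carrier G" "a \<noteq> \<one>" "a [^] p = \<one>" and c: "c \<in> carrier G" "c [^] p = \<one>"
  and iso: "lam a a + lam c c \<in> \<int>"
  shows False
proof -
  have "p \<noteq> 2" using p3 by auto
  then have p2: "p > 2" using prime_ge_2_nat[OF p] by linarith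
  have ppos: "p > 0" using p2 by simp
  obtain j :: nat where j: "c = a [^] j" using cyc[OF fin p a c sq] by blast
  have "lam c c - of_nat (j^2) * lam a a \<in> \<int>" unfolding j using sq_pow a by simp
  then have X: "(lam a a + lam c c) - (lam a a + of_nat (j^2) * lam a a) \<in> \<int>"
    using Zadd[of "lam a a" "lam a a"] by simp
  have "lam a a + of_nat (j^2) * lam a a \<in> \<int>" using Zin[OF Zs[OF X] iso] .
  moreover have "of_nat (j^2 + 1) * lam a a = lam a a + of_nat (j^2) * lam a a" by (simp add: algebra_simps)
  ultimately have i1: "of_nat (j^2 + 1) * lam a a \<in> \<int>" by simp
  obtain \<alpha> where al: "of_nat p * lam a a = of_int \<alpha>" using pZ[OF a(1) a(3) a(1)] Ints_cases by metis
  have laa: "lam a a = of_int \<alpha> / of_nat p" using al ppos by (simp add: field_simps)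
  obtain m where m: "order G = p * m" using d by blast
  have cop: "coprime p m"
  proof -
    have "\<not> p dvd m" using sq m by (simp add: power2_eq_square)
    then show ?thesis using p by (simp add: prime_imp_coprime)
  qed
  have na: "\<not> int p dvd \<alpha>"
  proof
    assume "int p dvd \<alpha>"
    then have laZ: "lam a a \<in> \<int>" using laa Zdiv by simp
    have "a = \<one>"
    proof (rule nondeg[OF a(1)])
      fix y assume y: "y \<in> carrier G"
      have "(y [^] m) [^] p = \<one>" using y m pow_order_eq_1[OF y] by (simp add: nat_pow_pow mult.commute)
      then obtain i where i: "y [^] m = a [^] (i::nat)" using cyc[OF fin p a _ _ sq] y by (meson nat_pow_closed)
      have "lam a (a [^] i) - of_nat i * lam a a \<in> \<int>" using powr a by simp
      moreover have "of_nat i * lam a a \<in> \<int>" using laZ by simp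
      ultimately have "lam a (y [^] m) \<in> \<int>" using i Zin by metis
      moreover have "lam a (y [^] m) - of_nat m * lam a y \<in> \<int>" using powr a y by simp
      ultimately have mZ: "of_nat m * lam a y \<in> \<int>" using Zin Zs by metis
      have pZ': "of_nat p * lam a y \<in> \<int>" using pZ a y by blast
      obtain u v where uv: "u * int p + v * int m = gcd (int p) (int m)" using bezout_int by blast
      have "gcd (int p) (int m) = 1" using cop by (simp add: coprime_int_iff gcd_int_def)
      then have uv1: "of_int u * of_nat p + of_int v * of_nat m = (1::rat)" using uv
        by (metis of_int_1 of_int_add of_int_mult of_int_of_nat_eq)
      have "lam a y = of_int u * (of_nat p * lam a y) + of_int v * (of_nat m * lam a y)"
        using uv1 by (metis (no_types, lifting) distrib_right mult.assoc mult_1)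
      also have "\<dots> \<in> \<int>" by (rule Ints_add[OF Ints_mult[OF Ints_of_int pZ'] Ints_mult[OF Ints_of_int mZ]])
      finally show "lam a y \<in> \<int>" .
    qed
    then show False using a by blast
  qed
  have e: "of_nat (j^2 + 1) * lam a a = of_int (int (j^2 + 1) * \<alpha>) / of_nat p" unfolding laa by simp
  from i1 have "of_int (int (j^2 + 1) * \<alpha>) / of_nat p \<in> (\<int> :: rat set)" by (simp only: e)
  then have "int p dvd int (j^2 + 1) * \<alpha>" using divZ ppos by blast
  moreover have pi: "Factorial_Ring.prime (int p)" using p by simp
  ultimately have "int p dvd int (j^2 + 1) \<or> int p dvd \<alpha>" using prime_dvd_mult_iff by blast
  then have "int p dvd int (j^2 + 1)" using na by blast
  then have "p dvd j^2 + 1" by (simp only: int_dvd_int_iff)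
  moreover have "odd ((p - 1) div 2)" using p3 by presburger
  ultimately show False using neg1_QR_iff[OF p p2] by blast
qed

lemma partC: assumes fin: "finite (carrier G)" and sqf: "squarefree (order G)"
  and pr: "\<forall>p::nat. Factorial_Ring.prime p \<and> p dvd order G \<longrightarrow> [p = 3] (mod 4)"
  shows triv
  unfolding triv_def
proof (intro allI impI)
  fix g h assume gh: "g \<in> carrier G \<and> h \<in> carrier G \<and> lam g g + lam h h \<in> \<int>"
  have g: "g \<in> carrier G" and h: "h \<in> carrier G" and iso: "lam g g + lam h h \<in> \<int>" using gh by auto
  show "g = \<one> \<and> h = \<one>"
  proof (rule ccontr)
    assume ne: "\<not> (g = \<one> \<and> h = \<one>)"
    define d where "d = lcm (ord g) (ord h)"
    have n0: "order G \<noteq> 0" using fin by (simp add: order_gt_0_iff_finite[symmetric])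
    have dn: "d dvd order G" unfolding d_def using ord_dvd_group_order g h by simp
    have d0: "d \<noteq> 0" using dn n0 by auto
    have gd: "g [^] d = \<one>" using g pow_eq_id d_def by simp
    have hd: "h [^] d = \<one>" using h pow_eq_id d_def by simp
    have d1: "d \<noteq> 1"
    proof
      assume "d = 1"
      moreover have "ord g dvd d" "ord h dvd d" unfolding d_def by simp_all
      ultimately have "ord g = 1" "ord h = 1" by simp_all
      then show False using ne ord_eq_1 g h by blast
    qed
    obtain p where p: "Factorial_Ring.prime p" "p dvd d" using prime_factor_nat[OF d1] by blast
    define k where "k = d div p"
    have dk: "d = k * p" unfolding k_def using p by simp
    have k0: "k > 0" using dk d0 by (metis mult_0 neq0_conv)
    have "k * 1 < k * p" using k0 prime_gt_1_nat[OF p(1)] by (intro mult_strict_left_mono) auto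
    then have kd: "k < d" "k > 0" using dk k0 by auto
    have gk: "(g [^] k) [^] p = \<one>" using gd g dk by (simp add: nat_pow_pow)
    have hk: "(h [^] k) [^] p = \<one>" using hd h dk by (simp add: nat_pow_pow)
    have nb: "\<not> (g [^] k = \<one> \<and> h [^] k = \<one>)"
    proof
      assume "g [^] k = \<one> \<and> h [^] k = \<one>"
      then have "ord g dvd k" "ord h dvd k" using pow_eq_id g h by auto
      then have "d dvd k" unfolding d_def by simp
      then show False using kd by (simp add: nat_dvd_not_less)
    qed
    have pn: "p dvd order G" using p dn by (meson dvd_trans)
    have p3: "p mod 4 = 3" using pr p pn by (simp add: cong_def)
    have sq: "\<not> p^2 dvd order G"
    proof
      assume "p^2 dvd order G"
      then have "p dvd 1" using squarefreeD[OF sqf] by blast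
      then have "p = 1" by simp
      then show False using p(1) by simp
    qed
    have e1: "lam (g [^] k) (g [^] k) - of_nat (k^2) * lam g g \<in> \<int>" using sq_pow g by simp
    have e2: "lam (h [^] k) (h [^] k) - of_nat (k^2) * lam h h \<in> \<int>" using sq_pow h by simp
    have "of_nat (k^2) * (lam g g + lam h h) \<in> \<int>" using iso by simp
    then have iso2: "lam (g [^] k) (g [^] k) + lam (h [^] k) (h [^] k) \<in> \<int>"
      using Zadd[OF e1 e2] by (simp add: algebra_simps)
    show False
    proof (cases "g [^] k = \<one>")
      case False
      then show False using C1[OF fin p(1) pn p3 sq _ False gk _ hk iso2] g h by simp
    next
      case True
      then have "h [^] k \<noteq> \<one>" using nb by blast
      then show False using C1[OF fin p(1) pn p3 sq _ _ hk _ gk] iso2 g h by (simp add: add.commute)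
    qed
  qed
qed

end

theorem mainTheorem4:
  fixes G :: "('a, 'm) monoid_scheme" and lam :: "'a \<Rightarrow> 'a \<Rightarrow> rat"
  assumes "comm_group G" and "finite (carrier G)" and "odd (order G)"
    and "linking_form G lam"
  shows "isotropic_cone (G \<times>\<times> G) (orth_sum lam lam) = {\<one>\<^bsub>G \<times>\<times> G\<^esub>}
     \<longleftrightarrow> (squarefree (order G) \<and>
          (\<forall>p::nat. Factorial_Ring.prime p \<and> p dvd order G \<longrightarrow> [p = 3] (mod 4)))"
proof -
  interpret lform G lam using assms(1,4) by (simp add: lform_def lform_axioms_def)
  have odd2: "\<And>p. Factorial_Ring.prime p \<Longrightarrow> p dvd order G \<Longrightarrow> p > 2"
  proof -
    fix p :: nat assume "Factorial_Ring.prime p" "p dvd order G"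
    then have "p \<noteq> 2" using assms(3) by auto
    moreover have "p \<ge> 2" using prime_ge_2_nat \<open>Factorial_Ring.prime p\<close> by blast
    ultimately show "p > 2" by linarith
  qed
  have n0: "order G \<noteq> 0" using assms(2) one_closed unfolding order_def by (auto simp: card_eq_0_iff)
  have eq: "isotropic_cone (G \<times>\<times> G) (orth_sum lam lam) = {\<one>\<^bsub>G \<times>\<times> G\<^esub>} \<longleftrightarrow> triv"
  proof
    assume c: "isotropic_cone (G \<times>\<times> G) (orth_sum lam lam) = {\<one>\<^bsub>G \<times>\<times> G\<^esub>}"
    show triv unfolding triv_def
    proof (intro allI impI)
      fix g h assume "g \<in> carrier G \<and> h \<in> carrier G \<and> lam g g + lam h h \<in> \<int>"
      then have "(g, h) \<in> isotropic_cone (G \<times>\<times> G) (orth_sum lam lam)" using cone_iff by blast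
      then show "g = \<one>\<^bsub>G\<^esub> \<and> h = \<one>\<^bsub>G\<^esub>" using c by simp
    qed
  next
    assume t: triv
    show "isotropic_cone (G \<times>\<times> G) (orth_sum lam lam) = {\<one>\<^bsub>G \<times>\<times> G\<^esub>}"
    proof
      show "isotropic_cone (G \<times>\<times> G) (orth_sum lam lam) \<subseteq> {\<one>\<^bsub>G \<times>\<times> G\<^esub>}"
      proof
        fix z assume z: "z \<in> isotropic_cone (G \<times>\<times> G) (orth_sum lam lam)"
        obtain g h where zg: "z = (g, h)" by (cases z)
        then have "g \<in> carrier G \<and> h \<in> carrier G \<and> lam g g + lam h h \<in> \<int>" using z cone_iff by simp
        then have "g = \<one>\<^bsub>G\<^esub> \<and> h = \<one>\<^bsub>G\<^esub>" using trivD[OF t] by blast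
        then show "z \<in> {\<one>\<^bsub>G \<times>\<times> G\<^esub>}" using zg by simp
      qed
      have "lam \<one>\<^bsub>G\<^esub> \<one>\<^bsub>G\<^esub> + lam \<one>\<^bsub>G\<^esub> \<one>\<^bsub>G\<^esub> \<in> \<int>" using onel by (simp add: Ints_add)
      then show "{\<one>\<^bsub>G \<times>\<times> G\<^esub>} \<subseteq> isotropic_cone (G \<times>\<times> G) (orth_sum lam lam)"
        using cone_iff by simp
    qed
  qed
  show ?thesis
  proof
    assume c: "isotropic_cone (G \<times>\<times> G) (orth_sum lam lam) = {\<one>\<^bsub>G \<times>\<times> G\<^esub>}"
    then have t: triv using eq by blast
    have "squarefree (order G)"
    proof -
      have "\<forall>p. Factorial_Ring.prime p \<longrightarrow> \<not> p^2 dvd order G"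
      proof (intro allI impI)
        fix p :: nat assume p: "Factorial_Ring.prime p"
        show "\<not> p^2 dvd order G"
        proof
          assume d: "p^2 dvd order G"
          have "p dvd p^2" by simp
          then have "p dvd order G" using d by (rule dvd_trans)
          then have "p > 2" using odd2 p by blast
          then show False using partB[OF assms(2) t p] d by blast
        qed
      qed
      then show ?thesis using squarefree_factorial_semiring[OF n0] by blast
    qed
    moreover have "\<forall>p::nat. Factorial_Ring.prime p \<and> p dvd order G \<longrightarrow> [p = 3] (mod 4)"
    proof (intro allI impI)
      fix p :: nat assume pp: "Factorial_Ring.prime p \<and> p dvd order G"
      then have "p mod 4 = 3" using partA[OF assms(2) t] odd2 by blast
      then show "[p = 3] (mod 4)" by (simp add: cong_def)
    qed
    ultimately show "squarefree (order G) \<and>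
          (\<forall>p::nat. Factorial_Ring.prime p \<and> p dvd order G \<longrightarrow> [p = 3] (mod 4))" by blast
  next
    assume "squarefree (order G) \<and>
          (\<forall>p::nat. Factorial_Ring.prime p \<and> p dvd order G \<longrightarrow> [p = 3] (mod 4))"
    then have triv using partC[OF assms(2)] by blast
    then show "isotropic_cone (G \<times>\<times> G) (orth_sum lam lam) = {\<one>\<^bsub>G \<times>\<times> G\<^esub>}" using eq by blast
  qed
qed

end
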